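(* For $j \geq 0$, define $s_{2j} = (gf)^j$ and $s_{2j+1} = f(gf)^j$. Let $m_i$ denote the $i$-th row in the matrix $M$. Then $m_i = s_i(m_0)$.
   Context: Let $X_2=\{0,1\}$. Define matrices $M_n$ of size $2^n \times n$ with entries in $X_2$ recursively by \[ M_1 = \begin{bmatrix} 0 \\ 1 \end{bmatrix}, \qquad M_{n+1} = \begin{bmatrix} M_n & 0_n \\ M_n^R & 1_n \end{bmatrix}, \] where $M_n^R$ is obtained from $M_n$ by reversing the order of its rows, and $0_n$, $1_n$ are column vectors with $2^n$ entries all equal to $0$, $1$ respectively (the rows of $M_n$ form the binary reflected Gray code of length $n$). Let $M=\lim_{n\to\infty}M_n$ be the infinite limit matrix, with rows indexed from $0$ and regarded as infinite binary words ending in $0^\infty$ (so $m_0=0^\infty$). The binary tree automorphisms $f$ and $g$ are defined recursively by $f(0w)=1w$, $f(1w)=0w$, and $g(0w)=0\,g(w)$, $g(1w)=1\,f(w)$ (and both fix the empty word). Composition is from right to left. *)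

theory Defs
  imports Main
begin

(* Binary alphabet X_2 = {0,1} encoded as bool: 0 = False, 1 = True.
   Finite words (tree vertices) are bool lists; infinite words are nat => bool. *)

(* M_n as the list of its 2^n rows, each row a list of length n. *)
fun Mmat :: "nat \<Rightarrow> bool list list" where
  "Mmat 0 = [[]]"
| "Mmat (Suc 0) = [[False], [True]]"
| "Mmat (Suc (Suc n)) =
     map (\<lambda>r. r @ [False]) (Mmat (Suc n)) @ map (\<lambda>r. r @ [True]) (rev (Mmat (Suc n)))"

(* Row i of the limit matrix M, as an infinite binary word: entry k is taken from
   M_{k+1+i}, which has more than i rows and more than k columns (rows stabilise). *)
definition mrow :: "nat \<Rightarrow> nat \<Rightarrow> bool" where
  "mrow i k = Mmat (Suc k + i) ! i ! k"

fun fa :: "bool list \<Rightarrow> bool list" where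
  "fa [] = []"
| "fa (False # w) = True # w"
| "fa (True # w) = False # w"

fun ga :: "bool list \<Rightarrow> bool list" where
  "ga [] = []"
| "ga (False # w) = False # ga w"
| "ga (True # w) = True # fa w"

(* Extension of a (length/prefix preserving) tree automorphism to infinite words. *)
definition act :: "(bool list \<Rightarrow> bool list) \<Rightarrow> (nat \<Rightarrow> bool) \<Rightarrow> nat \<Rightarrow> bool" where
  "act h w k = h (map w [0..<Suc k]) ! k"

definition s :: "nat \<Rightarrow> bool list \<Rightarrow> bool list" where
  "s i = (if even i then (ga \<circ> fa) ^^ (i div 2) else fa \<circ> (ga \<circ> fa) ^^ (i div 2))"

end

theory Submission
  imports Defs
begin

definition G :: "nat \<Rightarrow> nat \<Rightarrow> bool" where
  "G i k = (odd (i div 2^k) \<noteq> odd (i div 2^Suc k))"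

definition gl :: "nat \<Rightarrow> nat \<Rightarrow> bool list" where
  "gl n i = map (G i) [0..<n]"

lemma G_Suc: "G i (Suc k) = G (i div 2) k"
proof -
  have "i div 2^Suc k = i div 2 div 2^k" "i div 2^Suc (Suc k) = i div 2 div 2^Suc k"
    by (simp_all only: power_Suc div_mult2_eq)
  then show ?thesis unfolding G_def by simp
qed

lemma gl_0 [simp]: "gl 0 i = []" by (simp add: gl_def)

lemma gl_Suc: "gl (Suc n) i = (odd i \<noteq> odd (i div 2)) # gl n (i div 2)"
  unfolding gl_def
  by (simp add: map_upt_Suc G_Suc del: upt_Suc) (simp add: G_def)

lemma gl_snoc: "gl (Suc n) i = gl n i @ [G i n]"
  unfolding gl_def by simp

lemma gl_zero: "gl n 0 = replicate n False"
  unfolding gl_def G_def by (simp add: map_replicate_const)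

lemma fa_gl: "even i \<Longrightarrow> fa (gl n i) = gl n (Suc i)"
proof (cases n)
  case 0 then show ?thesis by simp
next
  case (Suc m)
  assume e: "even i"
  have "Suc i div 2 = i div 2" using e by presburger
  then show ?thesis using e Suc by (cases "odd (i div 2)") (simp_all add: gl_Suc)
qed

lemma ga_gl: "odd i \<Longrightarrow> ga (gl n i) = gl n (Suc i)"
proof (induction n arbitrary: i)
  case 0 then show ?case by simp
next
  case (Suc n)
  have d: "Suc i div 2 = Suc (i div 2)" using Suc.prems by presburger
  show ?case
  proof (cases "i mod 4 = 1")
    case True
    have "even (i div 2)" using True by presburger
    moreover have "odd i \<noteq> odd (i div 2)" "odd (Suc i) \<noteq> odd (Suc i div 2)"
      using True by presburger+
    ultimately show ?thesis using fa_gl[of "i div 2" n] d by (simp add: gl_Suc)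
  next
    case False
    have "odd (i div 2)" using False Suc.prems by presburger
    moreover have "\<not>(odd i \<noteq> odd (i div 2))" "\<not> (odd (Suc i) \<noteq> odd (Suc i div 2))"
      using False Suc.prems by presburger+
    ultimately show ?thesis using Suc.IH[of "i div 2"] d by (simp add: gl_Suc)
  qed
qed

lemma s_Suc: "s (Suc i) = (if even i then fa \<circ> s i else ga \<circ> s i)"
proof (cases "even i")
  case True
  then have "Suc i div 2 = i div 2" by presburger
  then show ?thesis using True by (simp add: s_def)
next
  case False
  then have "Suc i div 2 = Suc (i div 2)" by presburger
  then show ?thesis using False by (simp add: s_def o_assoc)
qed

lemma s_gl: "s i (replicate n False) = gl n i"
proof (induction i)
  case 0 then show ?case by (simp add: s_def gl_zero)
next
  case (Suc i)
  then show ?case by (simp add: s_Suc fa_gl ga_gl)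
qed

lemma gl_compl: "i + j + 1 = 2^Suc n \<Longrightarrow> gl n i = gl n j"
proof (induction n arbitrary: i j)
  case 0 then show ?case by simp
next
  case (Suc n)
  have p: "odd j = (\<not> odd i)" using Suc.prems by (simp; presburger)
  have h: "i div 2 + j div 2 + 1 = 2^Suc n" using Suc.prems p by (simp; presburger)
  have q: "odd (j div 2) = (\<not> odd (i div 2))" using h by (simp; presburger)
  show ?case using Suc.IH[OF h] p q by (simp add: gl_Suc)
qed

lemma Mmat_Suc: "Mmat (Suc n) = map (\<lambda>r. r @ [False]) (Mmat n) @ map (\<lambda>r. r @ [True]) (rev (Mmat n))"
  by (cases n) auto

lemma len_Mmat: "length (Mmat n) = 2^n"
  by (induction n) (auto simp: Mmat_Suc)

lemma Mmat_gl: "i < 2^n \<Longrightarrow> Mmat n ! i = gl n i"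
proof (induction n arbitrary: i)
  case 0 then show ?case by simp
next
  case (Suc n)
  show ?case
  proof (cases "i < 2^n")
    case True
    have "G i n = False" using True unfolding G_def by simp
    then show ?thesis using True Suc.IH[OF True] by (simp add: Mmat_Suc nth_append len_Mmat gl_snoc)
  next
    case False
    define j where "j = 2^Suc n - 1 - i"
    have jl: "j < 2^n" using False Suc.prems unfolding j_def by simp
    have ij: "i + j + 1 = 2^Suc n" using False Suc.prems unfolding j_def by simp
    have r: "rev (Mmat n) ! (i - 2^n) = Mmat n ! j"
      using False Suc.prems by (simp add: rev_nth len_Mmat j_def mult_2)
    have "i div 2^n = 1" using False Suc.prems
      by (metis div_less div_nat_eqI less_numeral_extra(1) mult_1 not_less power_Suc mult.commute Suc_1 mult_2_right)
    moreover have "i div 2^Suc n = i div 2^n div 2" by (simp only: power_Suc2 div_mult2_eq)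
    ultimately have "G i n = True" unfolding G_def by simp
    moreover have "i - 2^n < 2^n" using Suc.prems by simp
    ultimately show ?thesis using False r Suc.IH[OF jl] gl_compl[OF ij]
      by (simp add: Mmat_Suc nth_append len_Mmat gl_snoc)
  qed
qed

lemma mrow_eq: "mrow i k = G i k"
proof -
  have "i < 2 ^ (Suc k + i)"
    by (metis less_exp le_add2 order_less_le_trans power_increasing_iff one_less_numeral_iff semiring_norm(76) less_imp_le_nat add.commute)
  then show ?thesis unfolding mrow_def by (simp add: Mmat_gl gl_def del: upt_Suc)
qed

theorem mainTheorem10:
  shows "\<forall>i. mrow i = act (s i) (mrow 0)"
proof
  fix i
  have z: "map (mrow 0) [0..<Suc k] = replicate (Suc k) False" for k
    by (rule nth_equalityI) (simp_all add: mrow_eq G_def del: upt_Suc replicate_Suc)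
  show "mrow i = act (s i) (mrow 0)"
    by (rule ext) (simp add: act_def z s_gl mrow_eq gl_def del: upt_Suc replicate_Suc)
qed

end
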